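(* Let $\Gamma$ be a finite undirected graph with girth $g(\Gamma)\ge 5$. Then $G_{aut}^+(\Gamma)=G_{aut}^*(\Gamma)$; that is, the generators of $C(G_{aut}^+(\Gamma))$ satisfy $u_{ij}u_{kl}=u_{kl}u_{ij}$ for all $i,j,k,l$ with $(i,k)\in E$ and $(j,l)\in E$.
   Context: $\Gamma=(V,E)$ is a finite simple undirected graph, $V=\{1,\dots,n\}$. The girth is the length of a shortest cycle in $\Gamma$. $C(G_{aut}^+(\Gamma))$ is the universal unital $C^*$-algebra generated by $u_{ij}$, $1\le i,j\le n$, with relations: (R1) $u_{ij}=u_{ij}^*=u_{ij}^2$; (R2) $\sum_{l} u_{il}=1=\sum_{l} u_{li}$ for all $i$; (R3) $u_{ij}u_{kl}=u_{kl}u_{ij}=0$ whenever exactly one of $(i,k)\in E$, $(j,l)\in E$ holds. $C(G_{aut}^*(\Gamma))$ is the quotient by the additional relations (R4) $u_{ij}u_{kl}=u_{kl}u_{ij}$ for all $(i,k)\in E$, $(j,l)\in E$; "$G_{aut}^+(\Gamma)=G_{aut}^*(\Gamma)$" means (R4) already holds in $C(G_{aut}^+(\Gamma))$. *)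

theory Defs
  imports Complex_Main "HOL-Library.Extended_Nat"
begin

text \<open>The library has no complex vector spaces,
so a unital complex C*-algebra is rendered as a real unital Banach algebra
together with a central element ci (the scalar i times the unit) with ci*ci = -1,
so that complex scalar multiplication (a + b i) x is scaleR a x + scaleR b (ci * x);
plus a conjugate-linear anti-multiplicative involution adj satisfying the C*-identity.\<close>

class cstar_algebra = real_normed_algebra_1 + banach +
  fixes adj :: "'a \<Rightarrow> 'a"
    and ci :: 'a
  assumes ci_sq: "ci * ci = - 1"
    and ci_central: "ci * x = x * ci"
    and norm_complex_scale:
      "norm (scaleR a x + scaleR b (ci * x)) = sqrt (a\<^sup>2 + b\<^sup>2) * norm x"
    and adj_adj: "adj (adj x) = x"
    and adj_add: "adj (x + y) = adj x + adj y"
    and adj_scaleR: "adj (scaleR r x) = scaleR r (adj x)"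
    and adj_ci: "adj ci = - ci"
    and adj_mult: "adj (x * y) = adj y * adj x"
    and cstar_identity: "norm (adj x * x) = (norm x)\<^sup>2"

definition simple_graph :: "nat \<Rightarrow> (nat \<Rightarrow> nat \<Rightarrow> bool) \<Rightarrow> bool" where
  "simple_graph n E \<longleftrightarrow>
     (\<forall>i j. E i j \<longrightarrow> i \<in> {1..n} \<and> j \<in> {1..n}) \<and>
     (\<forall>i j. E i j \<longrightarrow> E j i) \<and> (\<forall>i. \<not> E i i)"

definition is_cycle :: "(nat \<Rightarrow> nat \<Rightarrow> bool) \<Rightarrow> nat list \<Rightarrow> bool" where
  "is_cycle E vs \<longleftrightarrow> length vs \<ge> 3 \<and> distinct vs \<and>
     (\<forall>m < length vs. E (vs ! m) (vs ! ((m + 1) mod length vs)))"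

text \<open>Girth: length of a shortest cycle (infinity if acyclic).\<close>
definition girth :: "(nat \<Rightarrow> nat \<Rightarrow> bool) \<Rightarrow> enat" where
  "girth E = (INF vs \<in> {vs. is_cycle E vs}. enat (length vs))"

end

theory Submission
  imports Defs
begin

context
  fixes n :: nat and E :: "nat \<Rightarrow> nat \<Rightarrow> bool"
    and u :: "nat \<Rightarrow> nat \<Rightarrow> 'a::cstar_algebra"
  assumes graph: "simple_graph n E"
    and girth5: "girth E \<ge> 5"
    and R1: "\<forall>i\<in>{1..n}. \<forall>j\<in>{1..n}. adj (u i j) = u i j \<and> u i j * u i j = u i j"
    and R2: "\<forall>i\<in>{1..n}. (\<Sum>l\<in>{1..n}. u i l) = 1 \<and> (\<Sum>l\<in>{1..n}. u l i) = 1"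
    and R3: "\<forall>i\<in>{1..n}. \<forall>j\<in>{1..n}. \<forall>k\<in>{1..n}. \<forall>l\<in>{1..n}.
               E i k \<noteq> E j l \<longrightarrow> u i j * u k l = 0 \<and> u k l * u i j = 0"
begin

lemma Ein: "E i k \<Longrightarrow> i \<in> {1..n} \<and> k \<in> {1..n}"
  using graph unfolding simple_graph_def by blast

lemma Esym: "E i k \<Longrightarrow> E k i"
  using graph unfolding simple_graph_def by blast

lemma Eirr: "\<not> E i i"
  using graph unfolding simple_graph_def by blast

lemma no4:
  assumes "E a b" "E b c" "E c d" "E d a" "a \<noteq> c" "b \<noteq> d"
  shows False
proof -
  have d: "distinct [a,b,c,d]" using Eirr assms by auto
  have e: "\<forall>m < 4. E ([a,b,c,d] ! m) ([a,b,c,d] ! ((m + 1) mod 4))"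
  proof (intro allI impI)
    fix m :: nat assume "m < 4"
    then have "m = 0 \<or> m = 1 \<or> m = 2 \<or> m = 3" by auto
    then show "E ([a,b,c,d] ! m) ([a,b,c,d] ! ((m + 1) mod 4))" using assms by auto
  qed
  have "is_cycle E [a,b,c,d]" unfolding is_cycle_def using d e by simp
  then have "girth E \<le> enat (length [a,b,c,d])"
    unfolding girth_def by (intro INF_lower) simp
  then have "girth E \<le> 4" by (simp add: numeral_eq_enat eval_nat_numeral)
  with girth5 have "(5::enat) \<le> 4" by (rule order_trans)
  then show False by (simp add: numeral_eq_enat)
qed

lemma R3a: "i \<in> {1..n} \<Longrightarrow> j \<in> {1..n} \<Longrightarrow> k \<in> {1..n} \<Longrightarrow> l \<in> {1..n} \<Longrightarrow>
   E i k \<noteq> E j l \<Longrightarrow> u i j * u k l = 0"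
  using R3 by blast

lemma R3b: "i \<in> {1..n} \<Longrightarrow> j \<in> {1..n} \<Longrightarrow> k \<in> {1..n} \<Longrightarrow> l \<in> {1..n} \<Longrightarrow>
   E i k \<noteq> E j l \<Longrightarrow> u k l * u i j = 0"
  using R3 by blast

lemma three:
  assumes i: "i \<in> {1..n}" and "E j l" "E p l" "j \<noteq> p" "E i a"
  shows "u i j * u i p = u i j * u a l * u i p"
proof -
  have j: "j \<in> {1..n}" and l: "l \<in> {1..n}" and p: "p \<in> {1..n}" and a: "a \<in> {1..n}"
    using Ein assms by blast+
  have "u i j * u i p = u i j * (\<Sum>l'\<in>{1..n}. u a l') * u i p"
    using R2 a by simp
  also have "\<dots> = (\<Sum>l'\<in>{1..n}. u i j * u a l' * u i p)"
    by (simp add: sum_distrib_left sum_distrib_right)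
  also have "\<dots> = (\<Sum>l'\<in>{l}. u i j * u a l' * u i p)"
  proof (rule sum.mono_neutral_right)
    show "finite {1..n}" by simp
    show "{l} \<subseteq> {1..n}" using l by simp
    show "\<forall>l'\<in>{1..n} - {l}. u i j * u a l' * u i p = 0"
    proof
      fix l' assume l': "l' \<in> {1..n} - {l}"
      show "u i j * u a l' * u i p = 0"
      proof (cases "E j l'")
        case False
        then have "u i j * u a l' = 0" using R3a[of i j a l'] i j a l' assms(5) by auto
        then show ?thesis by simp
      next
        case True
        show ?thesis
        proof (cases "E p l'")
          case False
          have "E a i" using assms(5) Esym by blast
          then have "u a l' * u i p = 0" using R3a[of a l' i p] i p a l' False Esym by auto
          then show ?thesis by (simp add: mult.assoc)
        next
          case True2: True
          have False using no4[of j l p l'] assms True True2 l' Esym by auto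
          then show ?thesis ..
        qed
      qed
    qed
  qed
  finally show ?thesis by simp
qed

definition N :: "nat \<Rightarrow> nat set" where "N v = {w \<in> {1..n}. E v w}"

lemma finN: "finite (N v)" unfolding N_def by simp

lemma orth:
  assumes i: "i \<in> {1..n}" and "E j l" "E p l" "j \<noteq> p" and c: "2 \<le> card (N i)"
  shows "u i j * u i p = 0"
proof -
  have j: "j \<in> {1..n}" and l: "l \<in> {1..n}" and p: "p \<in> {1..n}"
    using Ein assms by blast+
  have "u i j * u i p = u i j * (\<Sum>a\<in>{1..n}. u a l) * u i p"
    using R2 l by simp
  also have "\<dots> = (\<Sum>a\<in>{1..n}. u i j * u a l * u i p)"
    by (simp add: sum_distrib_left sum_distrib_right)
  also have "\<dots> = (\<Sum>a\<in>N i. u i j * u a l * u i p)"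
  proof (rule sum.mono_neutral_right)
    show "finite {1..n}" by simp
    show "N i \<subseteq> {1..n}" unfolding N_def by auto
    show "\<forall>a\<in>{1..n} - N i. u i j * u a l * u i p = 0"
    proof
      fix a assume a: "a \<in> {1..n} - N i"
      then have "u i j * u a l = 0" using R3a[of i j a l] i j l assms(2) unfolding N_def by auto
      then show "u i j * u a l * u i p = 0" by simp
    qed
  qed
  also have "\<dots> = (\<Sum>a\<in>N i. u i j * u i p)"
    by (rule sum.cong) (auto simp: N_def three[OF i assms(2,3,4)])
  also have "\<dots> = real (card (N i)) *\<^sub>R (u i j * u i p)"
    by (simp add: scaleR_conv_of_real)
  finally have eq: "u i j * u i p = real (card (N i)) *\<^sub>R (u i j * u i p)" .
  then have "(real (card (N i)) - 1) *\<^sub>R (u i j * u i p) = 0"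
    by (simp add: scaleR_left_diff_distrib)
  moreover have "real (card (N i)) - 1 \<noteq> 0" using c by simp
  ultimately show ?thesis by simp
qed

lemma deg:
  assumes i: "i \<in> {1..n}" and j: "j \<in> {1..n}"
  shows "real (card (N i)) *\<^sub>R u i j = real (card (N j)) *\<^sub>R u i j"
proof -
  have 1: "u i j = (\<Sum>l\<in>N j. u i j * u k l)" if k: "k \<in> N i" for k
  proof -
    have k': "k \<in> {1..n}" "E i k" using k unfolding N_def by auto
    have "u i j = u i j * (\<Sum>l\<in>{1..n}. u k l)" using R2 k' by simp
    also have "\<dots> = (\<Sum>l\<in>{1..n}. u i j * u k l)" by (simp add: sum_distrib_left)
    also have "\<dots> = (\<Sum>l\<in>N j. u i j * u k l)"
      by (rule sum.mono_neutral_right) (auto simp: N_def intro!: R3a i j k')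
    finally show ?thesis .
  qed
  have 2: "u i j = (\<Sum>k\<in>N i. u i j * u k l)" if l: "l \<in> N j" for l
  proof -
    have l': "l \<in> {1..n}" "E j l" using l unfolding N_def by auto
    have "u i j = u i j * (\<Sum>k\<in>{1..n}. u k l)" using R2 l' by simp
    also have "\<dots> = (\<Sum>k\<in>{1..n}. u i j * u k l)" by (simp add: sum_distrib_left)
    also have "\<dots> = (\<Sum>k\<in>N i. u i j * u k l)"
      by (rule sum.mono_neutral_right) (auto simp: N_def intro!: R3a i j l')
    finally show ?thesis .
  qed
  have "real (card (N i)) *\<^sub>R u i j = (\<Sum>k\<in>N i. u i j)" by (simp add: scaleR_conv_of_real)
  also have "\<dots> = (\<Sum>k\<in>N i. \<Sum>l\<in>N j. u i j * u k l)" by (rule sum.cong) (auto intro: 1)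
  also have "\<dots> = (\<Sum>l\<in>N j. \<Sum>k\<in>N i. u i j * u k l)" by (rule sum.swap)
  also have "\<dots> = (\<Sum>l\<in>N j. u i j)" by (rule sum.cong) (auto dest: 2)
  also have "\<dots> = real (card (N j)) *\<^sub>R u i j" by (simp add: scaleR_conv_of_real)
  finally show ?thesis .
qed

lemma comm:
  assumes i: "i \<in> {1..n}" and j: "j \<in> {1..n}" and k: "k \<in> {1..n}" and l: "l \<in> {1..n}"
    and ik: "E i k" and jl: "E j l"
  shows "u i j * u k l = u k l * u i j"
proof (cases "2 \<le> card (N i)")
  case True
  have "u i j * u k l = u i j * u k l * (\<Sum>p\<in>{1..n}. u i p)" using R2 i by simp
  also have "\<dots> = (\<Sum>p\<in>{1..n}. u i j * u k l * u i p)" by (simp add: sum_distrib_left)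
  also have "\<dots> = (\<Sum>p\<in>{j}. u i j * u k l * u i p)"
  proof (rule sum.mono_neutral_right)
    show "finite {1..n}" by simp
    show "{j} \<subseteq> {1..n}" using j by simp
    show "\<forall>p\<in>{1..n} - {j}. u i j * u k l * u i p = 0"
    proof
      fix p assume p: "p \<in> {1..n} - {j}"
      show "u i j * u k l * u i p = 0"
      proof (cases "E p l")
        case False
        have "u k l * u i p = 0" using R3a[of k l i p] k l i p False Esym ik by auto
        then show ?thesis by (simp add: mult.assoc)
      next
        case True
        have "u i j * u k l * u i p = u i j * u i p"
          using three[OF i jl True _ ik] p by simp
        also have "\<dots> = 0" using orth[OF i jl True _ \<open>2 \<le> card (N i)\<close>] p by simp
        finally show ?thesis .
      qed
    qed
  qed
  finally have eq: "u i j * u k l = u i j * u k l * u i j" by simp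
  have "adj (u i j * u k l) = u k l * u i j" using R1 i j k l by (simp add: adj_mult)
  moreover have "adj (u i j * u k l * u i j) = u i j * u k l * u i j"
    using R1 i j k l by (simp add: adj_mult mult.assoc)
  ultimately show ?thesis using eq by simp
next
  case False
  have "k \<in> N i" using k ik unfolding N_def by simp
  then have "card (N i) \<noteq> 0" using finN by auto
  with False have ci: "card (N i) = 1" by simp
  have lN: "l \<in> N j" using l jl unfolding N_def by simp
  show ?thesis
  proof (cases "card (N j) = 1")
    case True
    then have Nj: "N j = {l}" using lN by (metis card_1_singletonE singletonD)
    have "u i j = u i j * (\<Sum>b\<in>{1..n}. u k b)" using R2 k by simp
    also have "\<dots> = (\<Sum>b\<in>{1..n}. u i j * u k b)" by (simp add: sum_distrib_left)
    also have "\<dots> = (\<Sum>b\<in>N j. u i j * u k b)"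
      by (rule sum.mono_neutral_right) (auto simp: N_def intro!: R3a i j k ik)
    finally have e1: "u i j = u i j * u k l" using Nj by simp
    have "u i j = (\<Sum>b\<in>{1..n}. u k b) * u i j" using R2 k by simp
    also have "\<dots> = (\<Sum>b\<in>{1..n}. u k b * u i j)" by (simp add: sum_distrib_right)
    also have "\<dots> = (\<Sum>b\<in>N j. u k b * u i j)"
      by (rule sum.mono_neutral_right) (auto simp: N_def intro!: R3b i j k ik)
    finally have e2: "u i j = u k l * u i j" using Nj by simp
    show ?thesis using e1 e2 by simp
  next
    case False
    have "real (card (N i)) *\<^sub>R u i j = real (card (N j)) *\<^sub>R u i j" by (rule deg[OF i j])
    then have "(real (card (N j)) - 1) *\<^sub>R u i j = 0" using ci
      by (simp add: scaleR_left_diff_distrib)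
    moreover have "real (card (N j)) - 1 \<noteq> 0" using False by simp
    ultimately have "u i j = 0" by simp
    then show ?thesis by simp
  qed
qed

end

theorem theorem3p4:
  fixes n :: nat and E :: "nat \<Rightarrow> nat \<Rightarrow> bool"
    and u :: "nat \<Rightarrow> nat \<Rightarrow> 'a::cstar_algebra"
  assumes graph: "simple_graph n E"
    and girth5: "girth E \<ge> 5"
    and R1: "\<forall>i\<in>{1..n}. \<forall>j\<in>{1..n}. adj (u i j) = u i j \<and> u i j * u i j = u i j"
    and R2: "\<forall>i\<in>{1..n}. (\<Sum>l\<in>{1..n}. u i l) = 1 \<and> (\<Sum>l\<in>{1..n}. u l i) = 1"
    and R3: "\<forall>i\<in>{1..n}. \<forall>j\<in>{1..n}. \<forall>k\<in>{1..n}. \<forall>l\<in>{1..n}.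
               E i k \<noteq> E j l \<longrightarrow> u i j * u k l = 0 \<and> u k l * u i j = 0"
  shows "\<forall>i\<in>{1..n}. \<forall>j\<in>{1..n}. \<forall>k\<in>{1..n}. \<forall>l\<in>{1..n}.
           E i k \<and> E j l \<longrightarrow> u i j * u k l = u k l * u i j"
  using comm[OF assms] by blast

end
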